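(* Suppose Assumptions 1, 2 and 3 hold, let $k>0$, and consider the distributed dynamics $$\dot{\lambda}_i=d_i-\hat{x}_i(\lambda_i)+\phi_i\big(\hat{x}_i(\lambda_i)\big)+k\sum_{j\in\mathcal{N}_i}(\lambda_j-\lambda_i),\qquad i=1,\dots,N,$$ from an arbitrary initial condition in $\mathbb{R}^N$. (a) If $\sum_{i=1}^N\big(d_i-\bar{x}_i+\phi_i(\bar{x}_i)\big)>0$, then for every $i$, $\lambda_i(t)\to+\infty$ and $\lim_{t\to\infty}\dot{\lambda}_i(t)=D_0$, where $D_0=\frac1N\sum_{i=1}^N\big(d_i-\bar{x}_i+\phi_i(\bar{x}_i)\big)>0$. (b) If $\sum_{i=1}^N\big(d_i-\underline{x}_i+\phi_i(\underline{x}_i)\big)<0$, then for every $i$, $\lambda_i(t)\to-\infty$ and $\lim_{t\to\infty}\dot{\lambda}_i(t)=D_1$, where $D_1=\frac1N\sum_{i=1}^N\big(d_i-\underline{x}_i+\phi_i(\underline{x}_i)\big)<0$.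
   Context: For $i=1,\dots,N$: $d_i\in\mathbb{R}$, $\mathcal{X}_i=[\underline{x}_i,\bar{x}_i]$ a nonempty closed interval, $f_i,\phi_i:\mathbb{R}\to\mathbb{R}$. Assumption 1: for each $i$, $f_i$ and $\phi_i$ are continuously differentiable, $f_i$ is strictly convex on $\mathcal{X}_i$, $\phi_i$ is convex on $\mathcal{X}_i$, and $\phi_i'(x_i)<1$ for all $x_i\in\mathcal{X}_i$. Assumption 2: $f_i'(x_i)>0$ for all $x_i\in\mathcal{X}_i$ and all $i$. Assumption 3: the communication graph $\mathcal{G}=(\{1,\dots,N\},\mathcal{E})$ is undirected and connected; $\mathcal{N}_i=\{j:(j,i)\in\mathcal{E}\}$. Let $v_i(x_i)=f_i'(x_i)(1-\phi_i'(x_i))^{-1}$ on $\mathcal{X}_i$ (strictly increasing). Define for $\lambda\in\mathbb{R}$: $\hat{x}_i(\lambda)=\underline{x}_i$ if $\lambda\le v_i(\underline{x}_i)$; $\hat{x}_i(\lambda)=v_i^{-1}(\lambda)$ if $v_i(\underline{x}_i)<\lambda<v_i(\bar{x}_i)$; $\hat{x}_i(\lambda)=\bar{x}_i$ if $\lambda\ge v_i(\bar{x}_i)$. *)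

theory Defs
  imports "HOL-Analysis.Analysis"
begin

definition strict_convex_on_real :: "real set \<Rightarrow> (real \<Rightarrow> real) \<Rightarrow> bool" where
  "strict_convex_on_real S f \<longleftrightarrow>
     (\<forall>x\<in>S. \<forall>y\<in>S. \<forall>t. x \<noteq> y \<and> 0 < t \<and> t < 1 \<longrightarrow>
        f (t * x + (1 - t) * y) < t * f x + (1 - t) * f y)"

definition xhat :: "real \<Rightarrow> real \<Rightarrow> (real \<Rightarrow> real) \<Rightarrow> real \<Rightarrow> real" where
  "xhat lo hi v lam =
     (if lam \<le> v lo then lo
      else if v hi \<le> lam then hi
      else (THE x. lo \<le> x \<and> x \<le> hi \<and> v x = lam))"

end

theory Submission imports Defs begin



definition Lp :: "nat \<Rightarrow> (nat\<Rightarrow>nat\<Rightarrow>bool) \<Rightarrow> (nat\<Rightarrow>real) \<Rightarrow> nat \<Rightarrow> real" where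
  "Lp N E x i = (\<Sum>j\<in>{j. j < N \<and> E j i}. x j - x i)"

definition Qf :: "nat \<Rightarrow> (nat\<Rightarrow>nat\<Rightarrow>bool) \<Rightarrow> (nat\<Rightarrow>real) \<Rightarrow> real" where
  "Qf N E x = (\<Sum>i<N. \<Sum>j\<in>{j. j < N \<and> E j i}. (x j - x i)^2)"

lemma sum_nbr: "(\<Sum>j\<in>{j. j < (N::nat) \<and> E j i}. F j) = (\<Sum>j<N. if E j i then F j else 0)"
proof -
  have "{j. j < N \<and> E j i} = {j\<in>{..<N}. E j i}" by auto
  moreover have "(\<Sum>j\<in>{j\<in>{..<N}. E j i}. F j) = (\<Sum>j<N. if E j i then F j else 0)"
    by (rule sum.inter_filter) simp
  ultimately show ?thesis by simp
qed

lemma swap_nbr: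
  fixes N :: nat and E :: "nat \<Rightarrow> nat \<Rightarrow> bool"
  assumes sym: "\<forall>i j. E i j \<longrightarrow> E j i"
  shows "(\<Sum>i<N. \<Sum>j\<in>{j. j < N \<and> E j i}. h i j) = (\<Sum>i<N. \<Sum>j\<in>{j. j < N \<and> E j i}. h j i)"
proof -
  have "(\<Sum>i<N. \<Sum>j\<in>{j. j < N \<and> E j i}. h i j) = (\<Sum>i<N. \<Sum>j<N. if E j i then h i j else 0)"
    by (simp add: sum_nbr)
  also have "\<dots> = (\<Sum>j<N. \<Sum>i<N. if E j i then h i j else 0)" by (rule sum.swap)
  also have "\<dots> = (\<Sum>j<N. \<Sum>i<N. if E i j then h i j else 0)"
  proof -
    have "E j i = E i j" for i j using sym by blast
    then show ?thesis by simp
  qed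
  also have "\<dots> = (\<Sum>i<N. \<Sum>j\<in>{j. j < N \<and> E j i}. h j i)"
    by (simp add: sum_nbr)
  finally show ?thesis .
qed

lemma Lp_sum:
  assumes sym: "\<forall>i j. E i j \<longrightarrow> E j i"
  shows "(\<Sum>i<N. Lp N E x i) = 0"
proof -
  let ?S = "(\<Sum>i<N. \<Sum>j\<in>{j. j < N \<and> E j i}. x j - x i)"
  have "?S = (\<Sum>i<N. \<Sum>j\<in>{j. j < N \<and> E j i}. x i - x j)"
    using swap_nbr[OF sym, where N=N and h="\<lambda>i j. x j - x i"] by simp
  also have "\<dots> = - ?S" by (simp add: sum_negf[symmetric])
  finally show ?thesis unfolding Lp_def by simp
qed

lemma Lp_quad:
  assumes sym: "\<forall>i j. E i j \<longrightarrow> E j i"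
  shows "(\<Sum>i<N. x i * Lp N E x i) = - Qf N E x / 2"
proof -
  let ?S = "(\<Sum>i<N. \<Sum>j\<in>{j. j < N \<and> E j i}. x i * (x j - x i))"
  have 1: "?S = (\<Sum>i<N. \<Sum>j\<in>{j. j < N \<and> E j i}. x j * (x i - x j))"
    using swap_nbr[OF sym, where N=N and h="\<lambda>i j. x i * (x j - x i)"] by simp
  have "?S + ?S = (\<Sum>i<N. \<Sum>j\<in>{j. j < N \<and> E j i}. x i * (x j - x i) + x j * (x i - x j))"
    by (subst (2) 1) (simp add: sum.distrib)
  also have "\<dots> = - Qf N E x" unfolding Qf_def
    by (simp add: sum_negf[symmetric] power2_eq_square algebra_simps)
  finally have "?S = - Qf N E x / 2" by simp
  moreover have "(\<Sum>i<N. x i * Lp N E x i) = ?S" unfolding Lp_def by (simp add: sum_distrib_left)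
  ultimately show ?thesis by simp
qed

lemma Lp_shift: "Lp N E (\<lambda>j. x j - c) i = Lp N E x i"
  unfolding Lp_def by simp

lemma Qf_nonneg: "Qf N E x \<ge> 0"
  unfolding Qf_def by (intro sum_nonneg) auto

lemma Qf_term:
  assumes "j < N" "l < N" "E j l"
  shows "(x j - x l)^2 \<le> Qf N E x"
proof -
  have "(x j - x l)^2 \<le> (\<Sum>j'\<in>{j'. j' < N \<and> E j' l}. (x j' - x l)^2)"
    using assms by (intro member_le_sum) auto
  also have "\<dots> \<le> Qf N E x" unfolding Qf_def
    using assms by (intro member_le_sum[where f="\<lambda>l. \<Sum>j'\<in>{j'. j' < N \<and> E j' l}. (x j' - x l)^2"]) (auto intro: sum_nonneg)
  finally show ?thesis .
qed

lemma sq_sum: "((a::real)+b)^2 \<le> 2*a^2 + 2*b^2"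
proof -
  have "2*a^2+2*b^2 - (a+b)^2 = (a-b)^2" by (simp add: power2_eq_square algebra_simps)
  moreover have "(a-b)^2 \<ge> 0" by simp
  ultimately show ?thesis by linarith
qed

lemma path_bound:
  assumes "(\<lambda>a b. a < N \<and> b < N \<and> E a b)\<^sup>*\<^sup>* i j"
  shows "\<exists>c\<ge>0. \<forall>x::nat\<Rightarrow>real. (x i - x j)^2 \<le> c * Qf N E x"
  using assms
proof (induction rule: rtranclp_induct)
  case base
  then show ?case by (intro exI[of _ 0]) simp
next
  case (step j l)
  then obtain c where c: "c \<ge> 0" "\<forall>x. (x i - x j)^2 \<le> c * Qf N E x" by auto
  show ?case
  proof (intro exI[of _ "2*c+2"] conjI allI)
    fix x :: "nat \<Rightarrow> real"
    have "(x i - x l)^2 \<le> 2*(x i - x j)^2 + 2*(x j - x l)^2"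
      using sq_sum[of "x i - x j" "x j - x l"] by simp
    also have "\<dots> \<le> 2*(c * Qf N E x) + 2 * Qf N E x"
      using c Qf_term[of j N l E x] step(2) by (intro add_mono) auto
    finally show "(x i - x l)^2 \<le> (2*c+2) * Qf N E x" by (simp add: algebra_simps)
  qed (use c in auto)
qed

lemma poincare_pair:
  assumes conn: "\<forall>i<N. \<forall>j<N. (\<lambda>a b. a < N \<and> b < N \<and> E a b)\<^sup>*\<^sup>* i j"
  shows "\<exists>C>0. \<forall>x. \<forall>i<N. \<forall>j<N. (x i - x j)^2 \<le> C * Qf N E x"
proof -
  define c where "c i j = (SOME c. c\<ge>0 \<and> (\<forall>x. (x i - x j)^2 \<le> c * Qf N E x))" for i j
  have c: "c i j \<ge> 0 \<and> (\<forall>x. (x i - x j)^2 \<le> c i j * Qf N E x)" if "i<N" "j<N" for i j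
    unfolding c_def by (rule someI_ex) (use path_bound conn that in blast)
  define C where "C = 1 + (\<Sum>i<N. \<Sum>j<N. c i j)"
  have le: "c i j \<le> C" if "i<N" "j<N" for i j
  proof -
    have "c i j \<le> (\<Sum>j<N. c i j)" using c that by (intro member_le_sum) auto
    also have "\<dots> \<le> (\<Sum>i<N. \<Sum>j<N. c i j)"
      using c that by (intro member_le_sum[where f="\<lambda>i. \<Sum>j<N. c i j"] sum_nonneg) auto
    finally show ?thesis unfolding C_def by simp
  qed
  have "C > 0" unfolding C_def using c by (smt (verit) lessThan_iff sum_nonneg)
  moreover have "(x i - x j)^2 \<le> C * Qf N E x" if "i<N" "j<N" for x i j
    using c[OF that] le[OF that] Qf_nonneg[of N E x]
    by (meson mult_right_mono order_trans)
  ultimately show ?thesis by blast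
qed




lemma at_pos: "(t::real) > 0 \<Longrightarrow> at t within {0..} = at t"
  by (rule at_within_interior) simp

lemma meanzero_bound:
  fixes y :: "nat \<Rightarrow> real"
  assumes C: "C > 0" "Q \<ge> 0" and pw: "\<forall>i<N. \<forall>j<N. (y i - y j)^2 \<le> C * Q"
    and z: "(\<Sum>i<N. y i) = 0" and i: "i < N"
  shows "(y i)^2 \<le> C * Q"
proof -
  define s where "s = sqrt (C*Q)"
  have s0: "s \<ge> 0" and ss: "s^2 = C*Q" using C unfolding s_def by auto
  have ab: "\<bar>y i - y j\<bar> \<le> s" if "j<N" for j
  proof -
    have "sqrt ((y i - y j)^2) \<le> s" unfolding s_def using pw i that real_sqrt_le_mono by blast
    then show ?thesis by simp
  qed
  have "(\<Sum>j<N. y i - y j) = real N * y i"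
    using z by (simp add: sum_subtractf)
  then have "real N * \<bar>y i\<bar> = \<bar>\<Sum>j<N. y i - y j\<bar>" by (simp add: abs_mult)
  also have "\<dots> \<le> (\<Sum>j<N. \<bar>y i - y j\<bar>)" by (rule sum_abs)
  also have "\<dots> \<le> (\<Sum>j<(N::nat). s)" using ab by (intro sum_mono) auto
  also have "\<dots> = real N * s" by simp
  finally have "\<bar>y i\<bar> \<le> s" using i by (simp add: mult_le_cancel_left)
  then have "\<bar>y i\<bar>^2 \<le> s^2" using s0 by (intro power_mono) auto
  then show ?thesis using ss by simp
qed

lemma meanzero_sum_bound:
  fixes y :: "nat \<Rightarrow> real"
  assumes C: "C > 0" "Q \<ge> 0" and pw: "\<forall>i<N. \<forall>j<N. (y i - y j)^2 \<le> C * Q"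
    and z: "(\<Sum>i<N. y i) = 0"
  shows "(\<Sum>i<N. (y i)^2) \<le> real N * C * Q"
proof -
  have "(\<Sum>i<N. (y i)^2) \<le> (\<Sum>i<N. C*Q)"
    using meanzero_bound[OF C pw z] by (intro sum_mono) auto
  then show ?thesis by simp
qed

lemma bounded_by_deriv:
  fixes V V' :: "real \<Rightarrow> real"
  assumes cont: "continuous_on {0..} V"
    and der: "\<And>t. t > 0 \<Longrightarrow> (V has_real_derivative V' t) (at t)"
    and neg: "\<And>t. t > 0 \<Longrightarrow> V t > R \<Longrightarrow> V' t < 0"
    and t1: "t1 \<ge> 0"
  shows "V t1 \<le> max R (V 0)"
proof (rule ccontr)
  define M where "M = max R (V 0)"
  assume "\<not> V t1 \<le> max R (V 0)"
  then have big: "V t1 > M" unfolding M_def by (auto simp: max_def split: if_splits)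
  define A where "A = {0..t1} \<inter> V -` {..M}"
  have c1: "continuous_on {0..t1} V" using cont by (rule continuous_on_subset) auto
  have clA: "closed A" unfolding A_def by (rule continuous_closed_preimage[OF c1]) auto
  have "0 \<in> A" unfolding A_def M_def using t1 by auto
  then have neA: "A \<noteq> {}" by auto
  have bdA: "bdd_above A" unfolding A_def by (rule bdd_aboveI[of _ t1]) auto
  define s0 where "s0 = Sup A"
  have s0A: "s0 \<in> A" unfolding s0_def by (rule closed_contains_Sup[OF neA bdA clA])
  have s0le: "x \<le> s0" if "x \<in> A" for x unfolding s0_def using bdA that by (simp add: cSup_upper)
  have s0ge: "s0 \<ge> 0" and s0t: "s0 \<le> t1" and Vs0: "V s0 \<le> M" using s0A unfolding A_def by auto
  have "s0 \<noteq> t1" using Vs0 big by auto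
  with s0t have lt: "s0 < t1" by simp
  have gt: "V x > M" if "s0 < x" "x \<le> t1" for x
  proof (rule ccontr)
    assume "\<not> M < V x"
    then have "x \<in> A" unfolding A_def using that s0ge by auto
    then show False using s0le that by force
  qed
  have "V s0 > V t1"
  proof (rule DERIV_neg_imp_decreasing_open[OF lt])
    fix x assume x: "s0 < x" "x < t1"
    have "x > 0" using x s0ge by simp
    moreover have "V x > R" using gt[of x] x unfolding M_def by simp
    ultimately show "\<exists>y. DERIV V x :> y \<and> y < 0" using der neg by blast
  next
    show "continuous_on {s0..t1} V" using s0ge by (intro continuous_on_subset[OF cont]) auto
  qed
  then show False using Vs0 big by simp
qed




lemma young: "(\<epsilon>::real) > 0 \<Longrightarrow> 2*a*b \<le> \<epsilon>*a^2 + b^2/\<epsilon>"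
proof -
  assume e: "\<epsilon> > 0"
  have "\<epsilon>*(\<epsilon>*a^2 + b^2/\<epsilon> - 2*a*b) = (\<epsilon>*a - b)^2" using e
    by (simp add: power2_eq_square field_simps)
  then have "\<epsilon>*(\<epsilon>*a^2 + b^2/\<epsilon> - 2*a*b) \<ge> 0" by simp
  then show ?thesis using e by (simp add: zero_le_mult_iff)
qed

lemma deriv_test:
  fixes lam w :: "real \<Rightarrow> nat \<Rightarrow> real"
  assumes sym: "\<forall>i j. E i j \<longrightarrow> E j i"
    and ode: "\<forall>i<N. \<forall>t\<ge>0. ((\<lambda>s. lam s i) has_real_derivative (w t i + k * Lp N E (lam t) i)) (at t within {0..})"
    and t: "t \<ge> 0"
  shows "((\<lambda>s. \<Sum>i<N. lam s i) has_real_derivative (\<Sum>i<N. w t i)) (at t within {0..})"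
    and "((\<lambda>s. \<Sum>i<N. (lam s i - (\<Sum>j<N. lam s j)/real N)^2) has_real_derivative
          (2*(\<Sum>i<N. (lam t i - (\<Sum>j<N. lam t j)/real N) * w t i)
            - k * Qf N E (\<lambda>i. lam t i - (\<Sum>j<N. lam t j)/real N))) (at t within {0..})"
proof -
  define r where "r i = w t i + k * Lp N E (lam t) i" for i
  have dl: "((\<lambda>s. lam s i) has_real_derivative r i) (at t within {0..})" if "i<N" for i
    using ode that t unfolding r_def by auto
  have sr: "(\<Sum>i<N. r i) = (\<Sum>i<N. w t i)"
    unfolding r_def by (simp add: sum.distrib sum_distrib_left[symmetric] Lp_sum[OF sym])
  have dS: "((\<lambda>s. \<Sum>i<N. lam s i) has_real_derivative (\<Sum>i<N. r i)) (at t within {0..})"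
    by (rule DERIV_sum) (use dl in auto)
  then show "((\<lambda>s. \<Sum>i<N. lam s i) has_real_derivative (\<Sum>i<N. w t i)) (at t within {0..})"
    using sr by simp
  define e where "e i = lam t i - (\<Sum>j<N. lam t j)/real N" for i
  define m where "m = (\<Sum>i<N. r i) / real N"
  have de: "((\<lambda>s. (lam s i - (\<Sum>j<N. lam s j)/real N)^2) has_real_derivative
      (2 * e i * (r i - m))) (at t within {0..})" if "i<N" for i
  proof -
    have g: "((\<lambda>s. lam s i - (\<Sum>j<N. lam s j)/real N) has_real_derivative (r i - m)) (at t within {0..})"
      unfolding m_def by (rule DERIV_diff[OF dl[OF that] DERIV_cdivide[OF dS]])
    show ?thesis using DERIV_power[OF g, of 2] unfolding e_def by (simp add: algebra_simps)
  qed
  have dV: "((\<lambda>s. \<Sum>i<N. (lam s i - (\<Sum>j<N. lam s j)/real N)^2) has_real_derivative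
      (\<Sum>i<N. 2 * e i * (r i - m))) (at t within {0..})"
    by (rule DERIV_sum) (use de in auto)
  have sume: "(\<Sum>i<N. e i) = 0"
    unfolding e_def by (cases "N = 0") (simp_all add: sum_subtractf)
  have lpe: "Lp N E (lam t) i = Lp N E e i" for i
    unfolding e_def by (simp add: Lp_shift)
  have "(\<Sum>i<N. 2 * e i * (r i - m)) = 2 * (\<Sum>i<N. e i * r i) - 2 * m * (\<Sum>i<N. e i)"
    by (simp add: algebra_simps sum_subtractf sum_distrib_left sum_distrib_right)
  also have "\<dots> = 2 * (\<Sum>i<N. e i * r i)" using sume by simp
  also have "(\<Sum>i<N. e i * r i) = (\<Sum>i<N. e i * w t i) + k * (\<Sum>i<N. e i * Lp N E e i)"
    unfolding r_def lpe by (simp add: algebra_simps sum.distrib sum_distrib_left)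
  also have "(\<Sum>i<N. e i * Lp N E e i) = - Qf N E e / 2" by (rule Lp_quad[OF sym])
  finally have "(\<Sum>i<N. 2 * e i * (r i - m)) = 2*(\<Sum>i<N. e i * w t i) - k * Qf N E e"
    by simp
  then show "((\<lambda>s. \<Sum>i<N. (lam s i - (\<Sum>j<N. lam s j)/real N)^2) has_real_derivative
          (2*(\<Sum>i<N. (lam t i - (\<Sum>j<N. lam t j)/real N) * w t i)
            - k * Qf N E (\<lambda>i. lam t i - (\<Sum>j<N. lam t j)/real N))) (at t within {0..})"
    using dV unfolding e_def by simp
qed




lemma abstract_thm:
  fixes lam w :: "real \<Rightarrow> nat \<Rightarrow> real" and c \<theta> B :: "nat \<Rightarrow> real"
  assumes sym: "\<forall>i j. E i j \<longrightarrow> E j i"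
    and conn: "\<forall>i<N. \<forall>j<N. (\<lambda>a b. a < N \<and> b < N \<and> E a b)\<^sup>*\<^sup>* i j"
    and kpos: "k > 0"
    and ode: "\<forall>i<N. \<forall>t\<ge>0. ((\<lambda>s. lam s i) has_real_derivative (w t i + k * Lp N E (lam t) i)) (at t within {0..})"
    and bnd: "\<forall>i<N. \<forall>t\<ge>0. \<bar>w t i\<bar> \<le> B i"
    and low: "\<forall>i<N. \<forall>t\<ge>0. c i \<le> w t i"
    and sat: "\<forall>i<N. \<forall>t\<ge>0. \<theta> i \<le> lam t i \<longrightarrow> w t i = c i"
    and pos: "(\<Sum>i<N. c i) > 0"
  shows "\<forall>i<N. filterlim (\<lambda>t. lam t i) at_top at_top \<and>
           ((\<lambda>t. w t i + k * Lp N E (lam t) i) \<longlongrightarrow> (\<Sum>i<N. c i) / real N) at_top"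
proof -
  have Npos: "N > 0" using pos by (cases N) auto
  obtain C where C: "C > 0" "\<forall>x. \<forall>i<N. \<forall>j<N. (x i - x j)^2 \<le> C * Qf N E x"
    using poincare_pair[OF conn] by blast
  define K where "K = real N * C"
  have Kpos: "K > 0" unfolding K_def using Npos C by simp
  have poinc: "(\<Sum>i<N. (y i)^2) \<le> K * Qf N E y" if "(\<Sum>i<N. y i) = 0" for y
    unfolding K_def using meanzero_sum_bound[OF C(1) Qf_nonneg[of N E y] _ that] C(2) by simp
  define S where "S s = (\<Sum>j<N. lam s j)" for s
  define e where "e s i = lam s i - S s / real N" for s i
  define V where "V s = (\<Sum>i<N. (e s i)^2)" for s
  define V' where "V' t = 2*(\<Sum>i<N. e t i * w t i) - k * Qf N E (e t)" for t
  have dV: "(V has_real_derivative V' t) (at t within {0..})" if "t \<ge> 0" for t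
    using deriv_test(2)[OF sym ode that] unfolding V_def V'_def e_def S_def by simp
  have dS: "(S has_real_derivative (\<Sum>i<N. w t i)) (at t within {0..})" if "t \<ge> 0" for t
    using deriv_test(1)[OF sym ode that] unfolding S_def by simp
  have sume: "(\<Sum>i<N. e s i) = 0" for s
    unfolding e_def using Npos by (simp add: sum_subtractf S_def)
  define \<epsilon> where "\<epsilon> = k / (2*K)"
  have epos: "\<epsilon> > 0" unfolding \<epsilon>_def using kpos Kpos by simp
  define Bs where "Bs = (\<Sum>i<N. (B i)^2)"
  define R where "R = (Bs/\<epsilon>) / \<epsilon>"
  have negV: "V' t < 0" if "t > 0" "V t > R" for t
  proof -
    have "2*(\<Sum>i<N. e t i * w t i) = (\<Sum>i<N. 2 * e t i * w t i)" by (simp add: sum_distrib_left mult.assoc)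
    also have "\<dots> \<le> (\<Sum>i<N. \<epsilon> * (e t i)^2 + (B i)^2/\<epsilon>)"
    proof (intro sum_mono)
      fix i assume i: "i \<in> {..<N}"
      have "2 * e t i * w t i \<le> \<epsilon> * (e t i)^2 + (w t i)^2/\<epsilon>" by (rule young[OF epos])
      also have "(w t i)^2 \<le> (B i)^2"
        using bnd i that by (metis abs_le_square_iff abs_of_nonneg abs_ge_zero order_trans less_imp_le lessThan_iff power2_abs)
      then have "(w t i)^2/\<epsilon> \<le> (B i)^2/\<epsilon>" using epos by (simp add: divide_right_mono)
      finally show "2 * e t i * w t i \<le> \<epsilon> * (e t i)^2 + (B i)^2/\<epsilon>" by simp
    qed
    also have "\<dots> = \<epsilon> * V t + Bs/\<epsilon>"
      unfolding V_def Bs_def by (simp add: sum.distrib sum_distrib_left sum_divide_distrib)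
    finally have 1: "2*(\<Sum>i<N. e t i * w t i) \<le> \<epsilon> * V t + Bs/\<epsilon>" .
    have 2: "V t \<le> K * Qf N E (e t)" unfolding V_def by (rule poinc[OF sume])
    have "k * Qf N E (e t) \<ge> 2 * \<epsilon> * V t"
    proof -
      have "2 * \<epsilon> * V t = (k / K) * V t" unfolding \<epsilon>_def using Kpos by simp
      also have "\<dots> \<le> (k/K) * (K * Qf N E (e t))" using 2 kpos Kpos by (intro mult_left_mono) auto
      also have "\<dots> = k * Qf N E (e t)" using Kpos by simp
      finally show ?thesis .
    qed
    moreover have "\<epsilon> * V t > Bs/\<epsilon>"
      using that(2) epos unfolding R_def by (simp add: field_simps)
    ultimately show ?thesis unfolding V'_def using 1 by linarith
  qed
  have contV: "continuous_on {0..} V" by (rule DERIV_continuous_on[OF dV]) simp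
  define M where "M = max R (V 0)"
  have Vb: "V t \<le> M" if "t \<ge> 0" for t
    unfolding M_def
  proof (rule bounded_by_deriv[OF contV _ negV that])
    fix t :: real assume "t > 0"
    then show "(V has_real_derivative V' t) (at t)" using dV[of t] at_pos[of t] by simp
  qed
  define D where "D = (\<Sum>i<N. c i) / real N"
  have Dpos: "D > 0" unfolding D_def using pos Npos by simp
  have contS: "continuous_on {0..} S" by (rule DERIV_continuous_on[OF dS]) simp
  have Slow: "S t \<ge> S 0 + (\<Sum>i<N. c i) * t" if t: "t \<ge> 0" for t
  proof -
    have "S 0 - (\<Sum>i<N. c i) * 0 \<le> S t - (\<Sum>i<N. c i) * t"
    proof (rule DERIV_nonneg_imp_increasing_open[OF t])
      fix x :: real assume x: "0 < x" "x < t"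
      have "(S has_real_derivative (\<Sum>i<N. w x i)) (at x)" using dS[of x] at_pos[of x] x by simp
      then have "((\<lambda>s. S s - (\<Sum>i<N. c i) * s) has_real_derivative (\<Sum>i<N. w x i) - (\<Sum>i<N. c i) * 1) (at x)"
        by (intro DERIV_diff DERIV_cmult DERIV_ident)
      moreover have "(\<Sum>i<N. w x i) \<ge> (\<Sum>i<N. c i)" using low x by (intro sum_mono) auto
      ultimately show "\<exists>y. ((\<lambda>s. S s - (\<Sum>i<N. c i) * s) has_real_derivative y) (at x) \<and> 0 \<le> y" by force
    next
      show "continuous_on {0..t} (\<lambda>s. S s - (\<Sum>i<N. c i) * s)"
        by (intro continuous_intros continuous_on_subset[OF contS]) auto
    qed
    then show ?thesis by simp
  qed
  have elow: "e t i \<ge> -(M+1)" if "t \<ge> 0" "i < N" for t i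
  proof -
    have "(e t i)^2 \<le> V t" unfolding V_def using that by (intro member_le_sum) auto
    then have sq: "(e t i)^2 \<le> M" using Vb[OF that(1)] by simp
    show ?thesis
    proof (rule ccontr)
      assume "\<not> - (M + 1) \<le> e t i"
      then have "-(e t i) > M + 1" by simp
      moreover have M0: "M \<ge> 0" using sq by (meson order_trans zero_le_power2)
      moreover have "M + 1 > 0" using M0 by simp
      ultimately have "(-(e t i))^2 > (M+1)^2" by (smt (verit) power_strict_mono zero_less_numeral)
      moreover have "(M+1)^2 \<ge> M + 1" using M0 by (simp add: power2_eq_square)
      ultimately show False using sq by simp
    qed
  qed
  have lamlow: "lam t i \<ge> (-(M+1) + S 0 / real N) + D * t" if "t \<ge> 0" "i < N" for t i
  proof -
    have "lam t i = e t i + S t / real N" unfolding e_def by simp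
    moreover have "S t / real N \<ge> S 0 / real N + D * t"
    proof -
      have "(S 0 + (\<Sum>i<N. c i) * t) / real N \<le> S t / real N"
        using Slow[OF that(1)] by (intro divide_right_mono) auto
      moreover have "(S 0 + (\<Sum>i<N. c i) * t) / real N = S 0 / real N + D * t"
        unfolding D_def by (simp add: add_divide_distrib)
      ultimately show ?thesis by simp
    qed
    ultimately show ?thesis using elow[OF that] by linarith
  qed
  have lamtop: "filterlim (\<lambda>t. lam t i) at_top at_top" if i: "i < N" for i
  proof (rule filterlim_at_top_mono)
    have "filterlim (\<lambda>t. D * t) at_top at_top"
      by (rule filterlim_tendsto_pos_mult_at_top[OF tendsto_const Dpos filterlim_ident])
    then show "filterlim (\<lambda>t. (-(M+1) + S 0 / real N) + D * t) at_top at_top"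
      by (rule filterlim_tendsto_add_at_top[OF tendsto_const])
    show "\<forall>\<^sub>F t in at_top. (-(M+1) + S 0 / real N) + D * t \<le> lam t i"
      using lamlow i by (intro eventually_at_top_linorderI[of 0]) auto
  qed
  have "\<forall>\<^sub>F t in at_top. \<forall>i\<in>{..<N}. \<theta> i \<le> lam t i"
    using lamtop by (intro eventually_ball_finite) (auto simp: filterlim_at_top)
  then obtain T0 where T0: "\<forall>t\<ge>T0. \<forall>i\<in>{..<N}. \<theta> i \<le> lam t i"
    unfolding eventually_at_top_linorder by blast
  define T where "T = max T0 0"
  have T0le: "T \<ge> 0" unfolding T_def by simp
  have hw: "w t i = c i" if "t \<ge> T" "i < N" for t i
    using sat T0 that unfolding T_def by auto
  define u where "u t i = w t i + k * Lp N E (lam t) i" for t i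
  have dlam: "((\<lambda>s. lam s j) has_real_derivative u t j) (at t)" if "t > T" "j < N" for t j
  proof -
    have tp: "t > 0" using that T0le by simp
    have "((\<lambda>s. lam s j) has_real_derivative u t j) (at t within {0..})"
      using ode that tp unfolding u_def by auto
    then show ?thesis using at_pos[OF tp] by simp
  qed
  have du: "((\<lambda>s. u s i) has_real_derivative k * Lp N E (u t) i) (at t)" if t: "t > T" and i: "i < N" for t i
  proof -
    have "((\<lambda>s. \<Sum>j\<in>{j. j < N \<and> E j i}. lam s j - lam s i) has_real_derivative
          (\<Sum>j\<in>{j. j < N \<and> E j i}. u t j - u t i)) (at t)"
      by (rule DERIV_sum) (use dlam t i in \<open>auto intro: DERIV_diff\<close>)
    then have "((\<lambda>s. c i + k * Lp N E (lam s) i) has_real_derivative 0 + k * Lp N E (u t) i) (at t)"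
      unfolding Lp_def by (intro DERIV_add DERIV_const DERIV_cmult)
    then have "((\<lambda>s. c i + k * Lp N E (lam s) i) has_real_derivative k * Lp N E (u t) i) (at t)" by simp
    then show ?thesis
    proof (rule has_field_derivative_transform_within_open[where S="{T<..}"])
      show "open {T<..}" by simp
      show "t \<in> {T<..}" using t by simp
      fix s assume "s \<in> {T<..}"
      then show "c i + k * Lp N E (lam s) i = u s i" unfolding u_def using hw[of s i] i by simp
    qed
  qed
  have sumu: "(\<Sum>i<N. u t i) = real N * D" if "t \<ge> T" for t
  proof -
    have "(\<Sum>i<N. u t i) = (\<Sum>i<N. w t i) + k * (\<Sum>i<N. Lp N E (lam t) i)"
      unfolding u_def by (simp add: sum.distrib sum_distrib_left)
    also have "\<dots> = (\<Sum>i<N. c i)" using hw that by (simp add: Lp_sum[OF sym])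
    finally show ?thesis unfolding D_def using Npos by simp
  qed
  define z where "z t i = u t i - D" for t i
  have sumz: "(\<Sum>i<N. z t i) = 0" if "t \<ge> T" for t
    unfolding z_def using sumu[OF that] by (simp add: sum_subtractf)
  have dz: "((\<lambda>s. z s i) has_real_derivative k * Lp N E (z t) i) (at t)" if "t > T" "i < N" for t i
  proof -
    have "Lp N E (z t) i = Lp N E (u t) i" unfolding z_def by (rule Lp_shift)
    then show ?thesis unfolding z_def using DERIV_diff[OF du[OF that] DERIV_const[of D]] by simp
  qed
  define W where "W t = (\<Sum>i<N. (z t i)^2)" for t
  have dW: "(W has_real_derivative - k * Qf N E (z t)) (at t)" if t: "t > T" for t
  proof -
    have "(W has_real_derivative (\<Sum>i<N. 2 * (k * Lp N E (z t) i * z t i))) (at t)"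
      unfolding W_def
      by (rule DERIV_sum) (use DERIV_power[OF dz[OF t], of _ 2] in auto)
    moreover have "(\<Sum>i<N. 2 * (k * Lp N E (z t) i * z t i)) = 2 * k * (\<Sum>i<N. z t i * Lp N E (z t) i)"
      by (simp add: sum_distrib_left algebra_simps)
    moreover have "(\<Sum>i<N. z t i * Lp N E (z t) i) = - Qf N E (z t) / 2" by (rule Lp_quad[OF sym])
    ultimately show ?thesis by simp
  qed
  define a where "a = k / K"
  have apos: "a > 0" unfolding a_def using kpos Kpos by simp
  have Wdec: "W t \<le> K * Qf N E (z t)" if "t \<ge> T" for t
    unfolding W_def by (rule poinc[OF sumz[OF that]])
  define G where "G t = W t * exp (a * t)" for t
  have Gdec: "G t \<le> G (T+1)" if t: "t \<ge> T+1" for t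
  proof (rule DERIV_nonpos_imp_nonincreasing[OF t])
    fix x assume x: "T + 1 \<le> x" "x \<le> t"
    then have xT: "x > T" by simp
    have "(G has_real_derivative (- k * Qf N E (z x)) * exp (a * x) + W x * (exp (a * x) * (a * 1))) (at x)"
    proof -
      have lin: "((\<lambda>t. a * t) has_real_derivative a * 1) (at x)" by (intro DERIV_cmult DERIV_ident)
      have ex: "((\<lambda>t. exp (a * t)) has_real_derivative exp (a * x) * (a * 1)) (at x)"
        by (rule DERIV_chain2[OF DERIV_exp lin])
      show ?thesis unfolding G_def using DERIV_mult[OF dW[OF xT] ex] by (simp add: algebra_simps)
    qed
    moreover have "(- k * Qf N E (z x)) * exp (a * x) + W x * (exp (a * x) * (a * 1)) \<le> 0"
    proof -
      have "a * W x \<le> a * (K * Qf N E (z x))" using Wdec[of x] xT apos by (intro mult_left_mono) auto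
      also have "\<dots> = k * Qf N E (z x)" unfolding a_def using Kpos by simp
      finally have "(- k * Qf N E (z x)) + a * W x \<le> 0" by simp
      then have "((- k * Qf N E (z x)) + a * W x) * exp (a * x) \<le> 0"
        by (simp add: mult_nonpos_nonneg)
      then show ?thesis by (simp add: algebra_simps)
    qed
    ultimately show "\<exists>y. (G has_real_derivative y) (at x) \<and> y \<le> 0" by blast
  qed
  define G0 where "G0 = G (T+1)"
  have zb: "(z t i)^2 \<le> G0 * exp (- a * t)" if "t \<ge> T+1" "i < N" for t i
  proof -
    have "(z t i)^2 \<le> W t" unfolding W_def using that by (intro member_le_sum) auto
    also have "W t = G t * exp (- a * t)" unfolding G_def by (simp add: exp_minus field_simps)
    also have "\<dots> \<le> G0 * exp (- a * t)" unfolding G0_def using Gdec[OF that(1)] by simp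
    finally show ?thesis .
  qed
  have explim: "((\<lambda>t. G0 * exp (- a * t)) \<longlongrightarrow> 0) at_top"
  proof -
    have "filterlim (\<lambda>t. - a * t) at_bot at_top"
    proof -
      have "filterlim (\<lambda>t. a * t) at_top at_top"
        by (rule filterlim_tendsto_pos_mult_at_top[OF tendsto_const apos filterlim_ident])
      then show ?thesis by (simp add: filterlim_uminus_at_bot)
    qed
    then have "((\<lambda>t. exp (- a * t)) \<longlongrightarrow> 0) at_top"
      by (rule filterlim_compose[OF exp_at_bot])
    then show ?thesis using tendsto_mult[OF tendsto_const[of G0]] by fastforce
  qed
  have ulim: "((\<lambda>t. u t i) \<longlongrightarrow> D) at_top" if i: "i < N" for i
  proof -
    have "((\<lambda>t. (z t i)^2) \<longlongrightarrow> 0) at_top"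
    proof (rule tendsto_sandwich[OF _ _ tendsto_const explim])
      show "\<forall>\<^sub>F t in at_top. 0 \<le> (z t i)^2" by simp
      show "\<forall>\<^sub>F t in at_top. (z t i)^2 \<le> G0 * exp (- a * t)"
        using zb i by (intro eventually_at_top_linorderI[of "T+1"]) auto
    qed
    then have "((\<lambda>t. sqrt ((z t i)^2)) \<longlongrightarrow> sqrt 0) at_top" by (rule tendsto_real_sqrt)
    then have "((\<lambda>t. \<bar>z t i\<bar>) \<longlongrightarrow> 0) at_top" by simp
    then have "((\<lambda>t. z t i) \<longlongrightarrow> 0) at_top" by (simp add: tendsto_rabs_zero_iff)
    then have "((\<lambda>t. z t i + D) \<longlongrightarrow> 0 + D) at_top" by (intro tendsto_add tendsto_const)
    then show ?thesis unfolding z_def by simp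
  qed
  show ?thesis using lamtop ulim unfolding u_def D_def by blast
qed



lemma tangent_bounds:
  fixes g g' :: "real \<Rightarrow> real"
  assumes cv: "convex_on {lo..hi} g" and dg: "\<And>x. (g has_real_derivative g' x) (at x)"
    and xy: "lo \<le> x" "x < y" "y \<le> hi"
  shows "g' x \<le> (g y - g x) / (y - x)" and "(g y - g x) / (y - x) \<le> g' y"
proof -
  have xI: "x \<in> {lo..hi}" and yI: "y \<in> {lo..hi}" using xy by auto
  have l1: "((\<lambda>h. (g (x + h) - g x) / h) \<longlongrightarrow> g' x) (at_right 0)"
    using dg[of x] unfolding DERIV_def filterlim_at_split by simp
  show "g' x \<le> (g y - g x) / (y - x)"
  proof (rule tendsto_upperbound[OF l1 _ trivial_limit_at_right_real])
    show "\<forall>\<^sub>F h in at_right 0. (g (x + h) - g x) / h \<le> (g y - g x) / (y - x)"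
      unfolding eventually_at_right_field
    proof (intro exI[of _ "y - x"] conjI allI impI)
      show "0 < y - x" using xy by simp
      fix h :: real assume h: "0 < h" "h < y - x"
      have "(g x - g (x+h)) / (x - (x+h)) \<le> (g x - g y) / (x - y)"
        by (rule convex_on_slope_le(1)[OF cv xI yI]) (use h in auto)
      moreover have "(g x - g (x+h)) / (x - (x+h)) = (g (x + h) - g x) / h"
        by (simp add: field_simps) (smt (verit) divide_minus_left minus_diff_eq)
      moreover have "(g x - g y) / (x - y) = (g y - g x) / (y - x)"
        by (metis minus_diff_eq divide_minus_left divide_minus_right minus_minus)
      ultimately show "(g (x + h) - g x) / h \<le> (g y - g x) / (y - x)" by simp
    qed
  qed
  have l2: "((\<lambda>h. (g (y + h) - g y) / h) \<longlongrightarrow> g' y) (at_left 0)"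
    using dg[of y] unfolding DERIV_def filterlim_at_split by simp
  show "(g y - g x) / (y - x) \<le> g' y"
  proof (rule tendsto_lowerbound[OF l2 _ trivial_limit_at_left_real])
    show "\<forall>\<^sub>F h in at_left 0. (g y - g x) / (y - x) \<le> (g (y + h) - g y) / h"
      unfolding eventually_at_left_field
    proof (intro exI[of _ "x - y"] conjI allI impI)
      show "x - y < 0" using xy by simp
      fix h :: real assume h: "x - y < h" "h < 0"
      have "(g x - g y) / (x - y) \<le> (g (y+h) - g y) / ((y+h) - y)"
        by (rule convex_on_slope_le(2)[OF cv xI yI]) (use h in auto)
      moreover have "(g x - g y) / (x - y) = (g y - g x) / (y - x)"
        by (metis minus_diff_eq divide_minus_left divide_minus_right minus_minus)
      ultimately show "(g y - g x) / (y - x) \<le> (g (y + h) - g y) / h" by simp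
    qed
  qed
qed

lemma strict_imp_convex:
  assumes "strict_convex_on_real {lo..hi} f"
  shows "convex_on {lo..hi} f"
  unfolding convex_on_def
proof (intro conjI ballI allI impI)
  show "convex {lo..hi}" by simp
  fix x y u v :: real assume xy: "x \<in> {lo..hi}" "y \<in> {lo..hi}" and uv: "0 \<le> u" "0 \<le> v" "u + v = 1"
  show "f (u *\<^sub>R x + v *\<^sub>R y) \<le> u * f x + v * f y"
  proof (cases "x = y \<or> u = 0 \<or> v = 0")
    case True
    then show ?thesis
    proof (elim disjE)
      assume "x = y" then show ?thesis using uv by (simp add: distrib_right[symmetric])
    next
      assume "u = 0" then show ?thesis using uv by simp
    next
      assume "v = 0" then show ?thesis using uv by simp
    qed
  next
    case False
    then have "x \<noteq> y" "0 < u" "u < 1" using uv by auto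
    then have "f (u * x + (1 - u) * y) < u * f x + (1 - u) * f y"
      using assms xy unfolding strict_convex_on_real_def by blast
    moreover have "v = 1 - u" using uv by simp
    ultimately show ?thesis by simp
  qed
qed

lemma deriv_strict_mono:
  fixes f f' :: "real \<Rightarrow> real"
  assumes sc: "strict_convex_on_real {lo..hi} f" and df: "\<And>x. (f has_real_derivative f' x) (at x)"
    and xy: "lo \<le> x" "x < y" "y \<le> hi"
  shows "f' x < f' y"
proof -
  have cv: "convex_on {lo..hi} f" by (rule strict_imp_convex[OF sc])
  define m where "m = (x + y) / 2"
  have m: "x < m" "m < y" unfolding m_def using xy by auto
  have "f ((1/2) * x + (1 - 1/2) * y) < (1/2) * f x + (1 - 1/2) * f y"
  proof -
    have "x \<in> {lo..hi}" "y \<in> {lo..hi}" "x \<noteq> y" using xy by auto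
    moreover have "(0::real) < 1/2" "(1/2::real) < 1" by auto
    ultimately show ?thesis using sc unfolding strict_convex_on_real_def by blast
  qed
  then have fm: "2 * f m < f x + f y" unfolding m_def by (simp add: field_simps)
  have a: "f' x \<le> (f m - f x) / (m - x)" by (rule tangent_bounds(1)[OF cv df]) (use xy m in auto)
  have b: "(f y - f m) / (y - m) \<le> f' y" by (rule tangent_bounds(2)[OF cv df]) (use xy m in auto)
  have mx: "m - x = (y - x)/2" "y - m = (y - x)/2" unfolding m_def by (auto simp: field_simps)
  have "(f m - f x) / (m - x) < (f y - f m) / (y - m)"
    unfolding mx using fm xy by (intro divide_strict_right_mono) auto
  then show ?thesis using a b by linarith
qed

lemma deriv_mono:
  fixes f f' :: "real \<Rightarrow> real"
  assumes cv: "convex_on {lo..hi} f" and df: "\<And>x. (f has_real_derivative f' x) (at x)"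
    and xy: "lo \<le> x" "x \<le> y" "y \<le> hi"
  shows "f' x \<le> f' y"
proof (cases "x = y")
  case False
  then have "x < y" using xy by simp
  then show ?thesis using tangent_bounds[OF cv df xy(1) _ xy(3)] by (meson order_trans)
qed simp




lemma comp_facts:
  fixes f \<phi> f' \<phi>' :: "real \<Rightarrow> real" and lo hi :: real
  assumes lohi: "lo \<le> hi"
    and df: "\<forall>x. (f has_real_derivative f' x) (at x)"
    and dp: "\<forall>x. (\<phi> has_real_derivative \<phi>' x) (at x)"
    and cf: "continuous_on UNIV f'" and cp: "continuous_on UNIV \<phi>'"
    and sc: "strict_convex_on_real {lo..hi} f" and cv: "convex_on {lo..hi} \<phi>"
    and sl: "\<forall>x\<in>{lo..hi}. \<phi>' x < 1" and fp: "\<forall>x\<in>{lo..hi}. f' x > 0"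
  shows "lo \<le> xhat lo hi (\<lambda>x. f' x / (1 - \<phi>' x)) l \<and> xhat lo hi (\<lambda>x. f' x / (1 - \<phi>' x)) l \<le> hi"
    and "(\<lambda>x. f' x / (1 - \<phi>' x)) hi \<le> l \<Longrightarrow> xhat lo hi (\<lambda>x. f' x / (1 - \<phi>' x)) l = hi"
    and "l \<le> (\<lambda>x. f' x / (1 - \<phi>' x)) lo \<Longrightarrow> xhat lo hi (\<lambda>x. f' x / (1 - \<phi>' x)) l = lo"
    and "x \<in> {lo..hi} \<Longrightarrow> lo - \<phi> lo \<le> x - \<phi> x \<and> x - \<phi> x \<le> hi - \<phi> hi"
proof -
  define v where "v = (\<lambda>x. f' x / (1 - \<phi>' x))"
  have vmono: "v x < v y" if "lo \<le> x" "x < y" "y \<le> hi" for x y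
  proof -
    have a: "f' x < f' y" by (rule deriv_strict_mono[OF sc]) (use df that in auto)
    have b: "\<phi>' x \<le> \<phi>' y" by (rule deriv_mono[OF cv]) (use dp that in auto)
    have c: "1 - \<phi>' y > 0" using sl that by auto
    have fx: "f' x > 0" using fp that by auto
    have "f' x / (1 - \<phi>' x) \<le> f' x / (1 - \<phi>' y)"
      using b c fx by (intro divide_left_mono) auto
    also have "\<dots> < f' y / (1 - \<phi>' y)" using a c by (intro divide_strict_right_mono)
    finally show ?thesis unfolding v_def .
  qed
  have vcont: "continuous_on {lo..hi} v" unfolding v_def
  proof (rule continuous_on_divide)
    show "continuous_on {lo..hi} f'" using cf by (rule continuous_on_subset) simp
    have "continuous_on {lo..hi} \<phi>'" using cp by (rule continuous_on_subset) simp
    then show "continuous_on {lo..hi} (\<lambda>x. 1 - \<phi>' x)" by (intro continuous_on_diff continuous_on_const)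
    show "\<forall>x\<in>{lo..hi}. 1 - \<phi>' x \<noteq> 0" using sl by force
  qed
  show A: "lo \<le> xhat lo hi (\<lambda>x. f' x / (1 - \<phi>' x)) l \<and> xhat lo hi (\<lambda>x. f' x / (1 - \<phi>' x)) l \<le> hi"
  proof -
    have "lo \<le> xhat lo hi v l \<and> xhat lo hi v l \<le> hi"
    proof (cases "l \<le> v lo")
      case True then show ?thesis using lohi unfolding xhat_def by simp
    next
      case F1: False
      show ?thesis
      proof (cases "v hi \<le> l")
        case True then show ?thesis using lohi F1 unfolding xhat_def by simp
      next
        case F2: False
        have vv: "v lo \<le> l" "l \<le> v hi" using F1 F2 by auto
        obtain x where x: "lo \<le> x" "x \<le> hi" "v x = l"
          using IVT'[OF vv lohi vcont] by blast
        have uniq: "y = x" if "lo \<le> y \<and> y \<le> hi \<and> v y = l" for y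
        proof -
          have "\<not> y < x" using vmono[of y x] x that by auto
          moreover have "\<not> x < y" using vmono[of x y] x that by auto
          ultimately show ?thesis by simp
        qed
        have Px: "lo \<le> x \<and> x \<le> hi \<and> v x = l" using x by simp
        have "lo \<le> (THE x. lo \<le> x \<and> x \<le> hi \<and> v x = l) \<and> (THE x. lo \<le> x \<and> x \<le> hi \<and> v x = l) \<le> hi
              \<and> v (THE x. lo \<le> x \<and> x \<le> hi \<and> v x = l) = l"
          by (rule theI[where P="\<lambda>x. lo \<le> x \<and> x \<le> hi \<and> v x = l", OF Px uniq])
        then show ?thesis using F1 F2 unfolding xhat_def by simp
      qed
    qed
    then show ?thesis unfolding v_def .
  qed
  show "(\<lambda>x. f' x / (1 - \<phi>' x)) hi \<le> l \<Longrightarrow> xhat lo hi (\<lambda>x. f' x / (1 - \<phi>' x)) l = hi"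
  proof -
    assume h: "(\<lambda>x. f' x / (1 - \<phi>' x)) hi \<le> l"
    then have h': "v hi \<le> l" unfolding v_def .
    have "xhat lo hi v l = hi"
    proof (cases "l \<le> v lo")
      case True
      then have "v hi \<le> v lo" using h' by simp
      have "lo = hi"
      proof (rule ccontr)
        assume "lo \<noteq> hi"
        then have "v lo < v hi" using vmono[of lo hi] lohi by simp
        then show False using \<open>v hi \<le> v lo\<close> by simp
      qed
      then show ?thesis using True unfolding xhat_def by simp
    next
      case False then show ?thesis using h' unfolding xhat_def by simp
    qed
    then show ?thesis unfolding v_def .
  qed
  show "l \<le> (\<lambda>x. f' x / (1 - \<phi>' x)) lo \<Longrightarrow> xhat lo hi (\<lambda>x. f' x / (1 - \<phi>' x)) l = lo"
    unfolding xhat_def by simp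
  assume x: "x \<in> {lo..hi}"
  have gm: "a - \<phi> a \<le> b - \<phi> b" if "lo \<le> a" "a \<le> b" "b \<le> hi" for a b
  proof (rule DERIV_nonneg_imp_nondecreasing[OF that(2)])
    fix y assume y: "a \<le> y" "y \<le> b"
    have "((\<lambda>s. s - \<phi> s) has_real_derivative 1 - \<phi>' y) (at y)"
      using dp by (intro DERIV_diff DERIV_ident) auto
    moreover have "y \<in> {lo..hi}" using y that by auto
    then have "1 - \<phi>' y \<ge> 0" using sl by (simp add: less_imp_le)
    ultimately show "\<exists>d. ((\<lambda>s. s - \<phi> s) has_real_derivative d) (at y) \<and> 0 \<le> d" by blast
  qed
  show "lo - \<phi> lo \<le> x - \<phi> x \<and> x - \<phi> x \<le> hi - \<phi> hi"
    using gm[of lo x] gm[of x hi] x by auto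
qed




lemma Lp_neg: "Lp N E (\<lambda>j. - x j) i = - Lp N E x i"
  unfolding Lp_def by (simp add: sum_negf[symmetric])

theorem theorem4:
  fixes N :: nat
    and d lo hi :: "nat \<Rightarrow> real"
    and f \<phi> f' \<phi>' :: "nat \<Rightarrow> real \<Rightarrow> real"
    and E :: "nat \<Rightarrow> nat \<Rightarrow> bool"
    and k :: real
    and lam :: "real \<Rightarrow> nat \<Rightarrow> real"
  defines "v \<equiv> (\<lambda>i x. f' i x / (1 - \<phi>' i x))"
  defines "rhs \<equiv> (\<lambda>t i. d i - xhat (lo i) (hi i) (v i) (lam t i)
                     + \<phi> i (xhat (lo i) (hi i) (v i) (lam t i))
                     + k * (\<Sum>j\<in>{j. j < N \<and> E j i}. lam t j - lam t i))"
  assumes interval: "\<forall>i<N. lo i \<le> hi i"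
    and A1_f_deriv: "\<forall>i<N. \<forall>x. (f i has_real_derivative f' i x) (at x)"
    and A1_phi_deriv: "\<forall>i<N. \<forall>x. (\<phi> i has_real_derivative \<phi>' i x) (at x)"
    and A1_f_C1: "\<forall>i<N. continuous_on UNIV (f' i)"
    and A1_phi_C1: "\<forall>i<N. continuous_on UNIV (\<phi>' i)"
    and A1_f_sconv: "\<forall>i<N. strict_convex_on_real {lo i..hi i} (f i)"
    and A1_phi_conv: "\<forall>i<N. convex_on {lo i..hi i} (\<phi> i)"
    and A1_phi_slope: "\<forall>i<N. \<forall>x\<in>{lo i..hi i}. \<phi>' i x < 1"
    and A2: "\<forall>i<N. \<forall>x\<in>{lo i..hi i}. f' i x > 0"
    and A3_sym: "\<forall>i j. E i j \<longrightarrow> E j i"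
    and A3_conn: "\<forall>i<N. \<forall>j<N. (\<lambda>a b. a < N \<and> b < N \<and> E a b)\<^sup>*\<^sup>* i j"
    and k_pos: "k > 0"
    and ode: "\<forall>i<N. \<forall>t\<ge>0. ((\<lambda>s. lam s i) has_real_derivative rhs t i) (at t within {0..})"
  shows
    "((\<Sum>i<N. d i - hi i + \<phi> i (hi i)) > 0 \<longrightarrow>
        (\<forall>i<N. filterlim (\<lambda>t. lam t i) at_top at_top \<and>
               ((\<lambda>t. rhs t i) \<longlongrightarrow> (\<Sum>i<N. d i - hi i + \<phi> i (hi i)) / real N) at_top))
     \<and> ((\<Sum>i<N. d i - lo i + \<phi> i (lo i)) < 0 \<longrightarrow>
        (\<forall>i<N. filterlim (\<lambda>t. lam t i) at_bot at_top \<and>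
               ((\<lambda>t. rhs t i) \<longlongrightarrow> (\<Sum>i<N. d i - lo i + \<phi> i (lo i)) / real N) at_top))"
proof -
  define xh where "xh t i = xhat (lo i) (hi i) (v i) (lam t i)" for t i
  define w where "w t i = d i - xh t i + \<phi> i (xh t i)" for t i
  have rhs_eq: "rhs t i = w t i + k * Lp N E (lam t) i" for t i
    unfolding rhs_def w_def xh_def Lp_def by simp
  have CF: "(lo i \<le> xhat (lo i) (hi i) (v i) l \<and> xhat (lo i) (hi i) (v i) l \<le> hi i)
     \<and> (v i (hi i) \<le> l \<longrightarrow> xhat (lo i) (hi i) (v i) l = hi i)
     \<and> (l \<le> v i (lo i) \<longrightarrow> xhat (lo i) (hi i) (v i) l = lo i)
     \<and> (\<forall>x\<in>{lo i..hi i}. lo i - \<phi> i (lo i) \<le> x - \<phi> i x \<and> x - \<phi> i x \<le> hi i - \<phi> i (hi i))"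
    if i: "i < N" for i l
  proof -
    note cf = comp_facts[of "lo i" "hi i" "f i" "f' i" "\<phi> i" "\<phi>' i"]
    have p: "lo i \<le> hi i" "\<forall>x. (f i has_real_derivative f' i x) (at x)"
      "\<forall>x. (\<phi> i has_real_derivative \<phi>' i x) (at x)" "continuous_on UNIV (f' i)"
      "continuous_on UNIV (\<phi>' i)" "strict_convex_on_real {lo i..hi i} (f i)"
      "convex_on {lo i..hi i} (\<phi> i)" "\<forall>x\<in>{lo i..hi i}. \<phi>' i x < 1" "\<forall>x\<in>{lo i..hi i}. f' i x > 0"
      using assms i by auto
    show ?thesis unfolding v_def using cf[OF p] by blast
  qed
  have wlo: "d i - hi i + \<phi> i (hi i) \<le> w t i" and whi: "w t i \<le> d i - lo i + \<phi> i (lo i)"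
    if "i < N" for t i
  proof -
    have "xh t i \<in> {lo i..hi i}" unfolding xh_def using CF[OF that] by auto
    then have "lo i - \<phi> i (lo i) \<le> xh t i - \<phi> i (xh t i) \<and> xh t i - \<phi> i (xh t i) \<le> hi i - \<phi> i (hi i)"
      using CF[OF that] by blast
    then show "d i - hi i + \<phi> i (hi i) \<le> w t i" "w t i \<le> d i - lo i + \<phi> i (lo i)"
      unfolding w_def by auto
  qed
  define B where "B i = \<bar>d i - hi i + \<phi> i (hi i)\<bar> + \<bar>d i - lo i + \<phi> i (lo i)\<bar>" for i
  have bnd: "\<forall>i<N. \<forall>t\<ge>0. \<bar>w t i\<bar> \<le> B i"
    unfolding B_def using wlo whi by (smt (verit) abs_ge_self abs_minus_le_zero abs_of_nonneg abs_le_iff)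
  have odew: "\<forall>i<N. \<forall>t\<ge>0. ((\<lambda>s. lam s i) has_real_derivative (w t i + k * Lp N E (lam t) i)) (at t within {0..})"
    using ode rhs_eq by simp
  have partA: "(\<Sum>i<N. d i - hi i + \<phi> i (hi i)) > 0 \<longrightarrow>
        (\<forall>i<N. filterlim (\<lambda>t. lam t i) at_top at_top \<and>
               ((\<lambda>t. rhs t i) \<longlongrightarrow> (\<Sum>i<N. d i - hi i + \<phi> i (hi i)) / real N) at_top)"
  proof
    assume pos: "(\<Sum>i<N. d i - hi i + \<phi> i (hi i)) > 0"
    have sat: "\<forall>i<N. \<forall>t\<ge>0. v i (hi i) \<le> lam t i \<longrightarrow> w t i = d i - hi i + \<phi> i (hi i)"
      unfolding w_def xh_def using CF by auto
    have "\<forall>i<N. filterlim (\<lambda>t. lam t i) at_top at_top \<and>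
           ((\<lambda>t. w t i + k * Lp N E (lam t) i) \<longlongrightarrow> (\<Sum>i<N. d i - hi i + \<phi> i (hi i)) / real N) at_top"
      by (rule abstract_thm[OF A3_sym A3_conn k_pos odew bnd _ sat pos]) (use wlo in auto)
    then show "\<forall>i<N. filterlim (\<lambda>t. lam t i) at_top at_top \<and>
               ((\<lambda>t. rhs t i) \<longlongrightarrow> (\<Sum>i<N. d i - hi i + \<phi> i (hi i)) / real N) at_top"
      using rhs_eq by simp
  qed
  have partB: "(\<Sum>i<N. d i - lo i + \<phi> i (lo i)) < 0 \<longrightarrow>
        (\<forall>i<N. filterlim (\<lambda>t. lam t i) at_bot at_top \<and>
               ((\<lambda>t. rhs t i) \<longlongrightarrow> (\<Sum>i<N. d i - lo i + \<phi> i (lo i)) / real N) at_top)"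
  proof
    assume neg: "(\<Sum>i<N. d i - lo i + \<phi> i (lo i)) < 0"
    define lam2 where "lam2 t i = - lam t i" for t i
    define w2 where "w2 t i = - w t i" for t i
    define c2 where "c2 i = - (d i - lo i + \<phi> i (lo i))" for i
    have sc2: "(\<Sum>i<N. c2 i) = - (\<Sum>i<N. d i - lo i + \<phi> i (lo i))" unfolding c2_def by (rule sum_negf)
    have pos2: "(\<Sum>i<N. c2 i) > 0" using neg sc2 by linarith
    have lp2: "Lp N E (lam2 t) i = - Lp N E (lam t) i" for t i
      unfolding lam2_def using Lp_neg[of N E "lam t" i] by simp
    have ode2: "\<forall>i<N. \<forall>t\<ge>0. ((\<lambda>s. lam2 s i) has_real_derivative (w2 t i + k * Lp N E (lam2 t) i)) (at t within {0..})"
    proof (intro allI impI)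
      fix i t assume "i < N" "(0::real) \<le> t"
      then have "((\<lambda>s. lam s i) has_real_derivative (w t i + k * Lp N E (lam t) i)) (at t within {0..})"
        using odew by simp
      then have "((\<lambda>s. - lam s i) has_real_derivative - (w t i + k * Lp N E (lam t) i)) (at t within {0..})"
        by (rule DERIV_minus)
      then show "((\<lambda>s. lam2 s i) has_real_derivative (w2 t i + k * Lp N E (lam2 t) i)) (at t within {0..})"
        unfolding lam2_def w2_def lp2[unfolded lam2_def] by simp
    qed
    have bnd2: "\<forall>i<N. \<forall>t\<ge>0. \<bar>w2 t i\<bar> \<le> B i" using bnd unfolding w2_def by simp
    have low2: "\<forall>i<N. \<forall>t\<ge>0. c2 i \<le> w2 t i"
    proof (intro allI impI)
      fix i t assume "i < N" "(0::real) \<le> t"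
      then show "c2 i \<le> w2 t i" unfolding c2_def w2_def using whi[of i t] by linarith
    qed
    have sat2: "\<forall>i<N. \<forall>t\<ge>0. - v i (lo i) \<le> lam2 t i \<longrightarrow> w2 t i = c2 i"
      unfolding w2_def c2_def lam2_def w_def xh_def using CF by auto
    have R: "\<forall>i<N. filterlim (\<lambda>t. lam2 t i) at_top at_top \<and>
           ((\<lambda>t. w2 t i + k * Lp N E (lam2 t) i) \<longlongrightarrow> (\<Sum>i<N. c2 i) / real N) at_top"
      by (rule abstract_thm[OF A3_sym A3_conn k_pos ode2 bnd2 low2 sat2 pos2])
    show "\<forall>i<N. filterlim (\<lambda>t. lam t i) at_bot at_top \<and>
               ((\<lambda>t. rhs t i) \<longlongrightarrow> (\<Sum>i<N. d i - lo i + \<phi> i (lo i)) / real N) at_top"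
    proof (intro allI impI conjI)
      fix i assume i: "i < N"
      show "filterlim (\<lambda>t. lam t i) at_bot at_top"
        using R i unfolding lam2_def by (simp add: filterlim_uminus_at_bot)
      have "((\<lambda>t. w2 t i + k * Lp N E (lam2 t) i) \<longlongrightarrow> (\<Sum>i<N. c2 i) / real N) at_top" using R i by simp
      then have "((\<lambda>t. - (w2 t i + k * Lp N E (lam2 t) i)) \<longlongrightarrow> - ((\<Sum>i<N. c2 i) / real N)) at_top"
        by (rule tendsto_minus)
      moreover have "(\<lambda>t. - (w2 t i + k * Lp N E (lam2 t) i)) = (\<lambda>t. rhs t i)"
        unfolding w2_def lp2 rhs_eq by (simp add: add.commute)
      moreover have "- ((\<Sum>i<N. c2 i) / real N) = (\<Sum>i<N. d i - lo i + \<phi> i (lo i)) / real N"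
        unfolding sc2 by simp
      ultimately show "((\<lambda>t. rhs t i) \<longlongrightarrow> (\<Sum>i<N. d i - lo i + \<phi> i (lo i)) / real N) at_top" by simp
    qed
  qed
  show ?thesis using partA partB by blast
qed


end
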